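(* Let $A=(a^k)_{k\in[n]}$ be a finite collection (multiset) of points $a^k=(a^k_1,a^k_2)\in[0,1]^2$, $n\ge 1$. Then $A$ admits at least one boundaries-included average fixed point, i.e., a point $x\in[0,1]^2$ with $\operatorname{avg}(A\setminus A_{<,<}(x))=x$.
   Context: For a finite nonempty multiset $B\subset[0,1]^2$, $\operatorname{avg}(B)=\frac{1}{|B|}\sum_{b\in B}b$ (counted with multiplicity). For $x\in[0,1]^2$, $A_{<,<}(x)=\{a\in A: a_1<x_1,\ a_2<x_2\}$ (as a sub-multiset of $A$), and $A\setminus A_{<,<}(x)$ is the sub-multiset of the remaining elements. *)

theory Defs
  imports "HOL-Analysis.Analysis" "HOL-Library.Multiset"
begin

definition avg :: "(real \<times> real) multiset \<Rightarrow> real \<times> real" where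
  "avg B = ((\<Sum>\<^sub># (image_mset fst B)) / real (size B),
            (\<Sum>\<^sub># (image_mset snd B)) / real (size B))"

definition unit_square :: "(real \<times> real) set" where
  "unit_square = {p. 0 \<le> fst p \<and> fst p \<le> 1 \<and> 0 \<le> snd p \<and> snd p \<le> 1}"

definition lower_strict :: "(real \<times> real) multiset \<Rightarrow> real \<times> real \<Rightarrow> (real \<times> real) multiset" where
  "lower_strict A x = filter_mset (\<lambda>a. fst a < fst x \<and> snd a < snd x) A"

end

theory Submission
  imports Defs
begin

lemma sum_le_aux: "(\<forall>a\<in>#M. f a \<le> (c::real)) \<Longrightarrow> sum_mset (image_mset f M) \<le> real (size M) * c"
  by (induction M) (auto simp: algebra_simps)

lemma sum_ge_aux: "(\<forall>a\<in>#M. f a \<ge> (c::real)) \<Longrightarrow> sum_mset (image_mset f M) \<ge> real (size M) * c"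
  by (induction M) (auto simp: algebra_simps)

lemma sum_less_aux: "M \<noteq> {#} \<Longrightarrow> (\<forall>a\<in>#M. f a < (c::real)) \<Longrightarrow> sum_mset (image_mset f M) < real (size M) * c"
proof (induction M)
  case empty then show ?case by simp
next
  case (add x M)
  show ?case
  proof (cases "M = {#}")
    case True then show ?thesis using add by simp
  next
    case False then show ?thesis using add by (auto simp: algebra_simps)
  qed
qed

definition U :: "(real \<times> real) multiset \<Rightarrow> real \<times> real \<Rightarrow> (real \<times> real) multiset" where
  "U A x = filter_mset (\<lambda>a. \<not> (fst a < fst x \<and> snd a < snd x)) A"

lemma U_eq: "A - lower_strict A x = U A x"
  unfolding U_def lower_strict_def by (rule multiset_eqI) simp

lemma avg_in_square:
  assumes "S \<noteq> {#}" "set_mset S \<subseteq> unit_square"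
  shows "avg S \<in> unit_square"
proof -
  have sp: "real (size S) > 0" using assms(1) by (simp add: nonempty_has_size)
  have a: "\<forall>a\<in>#S. fst a \<ge> 0 \<and> fst a \<le> 1 \<and> snd a \<ge> 0 \<and> snd a \<le> 1"
    using assms(2) unfolding unit_square_def by auto
  have "sum_mset (image_mset fst S) \<ge> real (size S) * 0" by (rule sum_ge_aux) (use a in auto)
  moreover have "sum_mset (image_mset fst S) \<le> real (size S) * 1" by (rule sum_le_aux) (use a in auto)
  moreover have "sum_mset (image_mset snd S) \<ge> real (size S) * 0" by (rule sum_ge_aux) (use a in auto)
  moreover have "sum_mset (image_mset snd S) \<le> real (size S) * 1" by (rule sum_le_aux) (use a in auto)
  ultimately show ?thesis using sp unfolding avg_def unit_square_def
    by (auto simp: divide_simps)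
qed

lemma coord_step:
  fixes f :: "real \<times> real \<Rightarrow> real"
  assumes S: "S = Sy + R" and Sne: "S \<noteq> {#}"
    and yf: "yf = sum_mset (image_mset f S) / real (size S)"
    and R: "\<forall>a\<in>#R. f a < yf"
  shows "Sy \<noteq> {#} \<and> sum_mset (image_mset f Sy) \<ge> real (size Sy) * yf"
proof -
  have sp: "real (size S) > 0" using Sne by (simp add: nonempty_has_size)
  have tot: "sum_mset (image_mset f S) = real (size S) * yf" using yf sp by simp
  have split: "sum_mset (image_mset f S) = sum_mset (image_mset f Sy) + sum_mset (image_mset f R)"
    using S by simp
  have sz: "real (size S) = real (size Sy) + real (size R)" using S by simp
  have Rle: "sum_mset (image_mset f R) \<le> real (size R) * yf" using sum_le_aux[of R f yf] R less_imp_le by blast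
  have ne: "Sy \<noteq> {#}"
  proof
    assume "Sy = {#}"
    then have "R = S" "R \<noteq> {#}" using S Sne by auto
    then have "sum_mset (image_mset f R) < real (size R) * yf" using sum_less_aux[of R f yf] R by auto
    then show False using tot \<open>R = S\<close> by simp
  qed
  have "sum_mset (image_mset f Sy) \<ge> real (size Sy) * yf"
    using tot split sz Rle by (simp add: algebra_simps)
  then show ?thesis using ne by simp
qed

lemma main_ind:
  assumes sq: "set_mset A \<subseteq> unit_square"
  shows "\<forall>x. size (U A x) = n \<longrightarrow> x \<in> unit_square \<longrightarrow> U A x \<noteq> {#} \<longrightarrow>
     fst x \<le> fst (avg (U A x)) \<longrightarrow> snd x \<le> snd (avg (U A x)) \<longrightarrow>
     (\<exists>z\<in>unit_square. U A z \<noteq> {#} \<and> avg (U A z) = z)"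
proof (induction n rule: less_induct)
  case (less n)
  show ?case
  proof (intro allI impI)
    fix x assume sz: "size (U A x) = n" and xs: "x \<in> unit_square" and ne: "U A x \<noteq> {#}"
      and l1: "fst x \<le> fst (avg (U A x))" and l2: "snd x \<le> snd (avg (U A x))"
    define y where "y = avg (U A x)"
    have Usub: "set_mset (U A x) \<subseteq> unit_square" using sq unfolding U_def by auto
    have ys: "y \<in> unit_square" unfolding y_def by (rule avg_in_square[OF ne Usub])
    define Q where "Q = (\<lambda>a::real\<times>real. fst a < fst y \<and> snd a < snd y)"
    have Uy: "U A y = filter_mset (\<lambda>a. \<not> Q a) (U A x)"
      unfolding U_def Q_def filter_filter_mset using l1 l2 unfolding y_def
      by (intro filter_mset_cong) auto
    have part: "U A x = U A y + filter_mset Q (U A x)"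
      unfolding Uy by (simp add: multiset_partition[symmetric] add.commute)
    have c1: "U A y \<noteq> {#} \<and> sum_mset (image_mset fst (U A y)) \<ge> real (size (U A y)) * fst y"
      by (rule coord_step[OF part ne]) (auto simp: y_def avg_def Q_def)
    have c2: "U A y \<noteq> {#} \<and> sum_mset (image_mset snd (U A y)) \<ge> real (size (U A y)) * snd y"
      by (rule coord_step[OF part ne]) (auto simp: y_def avg_def Q_def)
    have syp: "real (size (U A y)) > 0" using c1 by (simp add: nonempty_has_size)
    have g1: "fst y \<le> fst (avg (U A y))" using c1 syp unfolding avg_def by (simp add: field_simps)
    have g2: "snd y \<le> snd (avg (U A y))" using c2 syp unfolding avg_def by (simp add: field_simps)
    show "\<exists>z\<in>unit_square. U A z \<noteq> {#} \<and> avg (U A z) = z"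
    proof (cases "filter_mset Q (U A x) = {#}")
      case True
      then have "U A y = U A x" using part by (metis add.right_neutral)
      then show ?thesis using ys ne y_def by metis
    next
      case False
      then have "size (U A y) < n" using part sz
        by (metis add_less_cancel_left add.right_neutral nonempty_has_size size_union)
      then show ?thesis using less.IH c1 ys g1 g2 by blast
    qed
  qed
qed

theorem lemma1:
  fixes A :: "(real \<times> real) multiset"
  assumes "A \<noteq> {#}"
    and "set_mset A \<subseteq> unit_square"
  shows "\<exists>x\<in>unit_square. A - lower_strict A x \<noteq> {#} \<and> avg (A - lower_strict A x) = x"
proof -
  have U0: "U A (0,0) = A" unfolding U_def using assms(2) unfolding unit_square_def
    by (subst filter_mset_eq_conv) force
  have z: "(0::real,0::real) \<in> unit_square" unfolding unit_square_def by simp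
  have av: "avg A \<in> unit_square" by (rule avg_in_square[OF assms])
  have "\<exists>z\<in>unit_square. U A z \<noteq> {#} \<and> avg (U A z) = z"
    using spec[OF main_ind[OF assms(2), of "size A"], of "(0,0)"] U0 z av assms(1)
    unfolding unit_square_def by auto
  then show ?thesis unfolding U_eq .
qed

end
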